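(* Let $n\geq 2$ be an integer and let $D\subset\{0,1,\ldots,n^2\}$ be such that $\Delta:=D-D$ is sparse. Let $k\geq1$ and let $(\delta_1,\ldots,\delta_k),(\delta_1',\ldots,\delta_k')\in\Delta^k$ with $\delta_j\neq\delta_j'$ for some $1\le j\le k$. Then the $k$-tiles $\mathcal{E}_{\delta_1,\ldots,\delta_k}$ and $\mathcal{E}_{\delta_1',\ldots,\delta_k'}$ of $\mathcal{E}_n$ are disjoint.
   Context: Let $b:=-n+i$. $\mathcal{E}_n$ is the attractor of $\{z\mapsto b^{-1}(z+\delta): \delta\in\{0,\pm1,\ldots,\pm n^2\}\}$, i.e. $\mathcal{E}_n=\{\sum_{j\ge1}\delta_jb^{-j}: \delta_j\in\{-n^2,\ldots,n^2\}\}$. For $\delta_1,\ldots,\delta_k\in\{-n^2,\ldots,n^2\}$, the $k$-tile $\mathcal{E}_{\delta_1,\ldots,\delta_k}$ is $\{\sum_{j=1}^k\delta_jb^{-j}+b^{-k}e: e\in\mathcal{E}_n\}$. $\Delta$ is called sparse if for all $\delta\neq\delta'$ in $\Delta$, $|\delta-\delta'|>2$ when $n\geq5$, and $|\delta-\delta'|>3$ when $n\in\{2,3,4\}$. *)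

theory Defs
  imports Complex_Main
begin

definition base :: "nat \<Rightarrow> complex" where
  "base n = Complex (- real n) 1"

text \<open>The attractor E_n: all sums  sum_{j>=1} delta_j b^{-j}  with digits
  delta_j in {-n^2..n^2}.  The digit sequence is indexed from 0, so d j is delta_{j+1}.\<close>
definition attractor :: "nat \<Rightarrow> complex set" where
  "attractor n = {(\<Sum>j. of_int (d j) * inverse (base n) ^ (Suc j)) | d.
      \<forall>j. d j \<in> {- int (n^2) .. int (n^2)}}"

definition tile :: "nat \<Rightarrow> int list \<Rightarrow> complex set" where
  "tile n ds = {(\<Sum>j<length ds. of_int (ds ! j) * inverse (base n) ^ (Suc j))
                 + inverse (base n) ^ (length ds) * e | e. e \<in> attractor n}"

definition sparse :: "nat \<Rightarrow> int set \<Rightarrow> bool" where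
  "sparse n \<Delta> \<longleftrightarrow> (\<forall>\<delta>\<in>\<Delta>. \<forall>\<delta>'\<in>\<Delta>. \<delta> \<noteq> \<delta>' \<longrightarrow>
      (if n \<ge> 5 then \<bar>\<delta> - \<delta>'\<bar> > 2 else \<bar>\<delta> - \<delta>'\<bar> > 3))"

definition diffset :: "int set \<Rightarrow> int set" where
  "diffset D = {d - d' | d d'. d \<in> D \<and> d' \<in> D}"

end

theory Submission imports Defs begin

definition V :: "nat \<Rightarrow> (nat \<Rightarrow> int) \<Rightarrow> complex" where
  "V n h = (\<Sum>j. of_int (h j) * inverse (base n) ^ Suc j)"

lemma beta_eq: "inverse (base n) = Complex (- real n / (real n ^ 2 + 1)) (- 1 / (real n ^ 2 + 1))"
  by (simp add: base_def complex_eq_iff power2_eq_square)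

lemma ReIm_beta:
  "Re (inverse (base n) * w) = (- real n * Re w + Im w) / (real n ^ 2 + 1)"
  "Im (inverse (base n) * w) = (- Re w - real n * Im w) / (real n ^ 2 + 1)"
proof -
  have q: "real n ^ 2 + 1 \<noteq> 0" using zero_le_power2[of "real n"] by linarith
  have e1: "Re (Complex a c * w) = a * Re w - c * Im w" "Im (Complex a c * w) = a * Im w + c * Re w" for a c
    by simp_all
  have e2: "(- r / q) * x - (- 1 / q) * y = (- r * x + y) / q" for r q x y :: real
    by (simp add: diff_divide_distrib add_divide_distrib)
  have e3: "(- r / q) * y + (- 1 / q) * x = (- x - r * y) / q" for r q x y :: real
    by (simp add: diff_divide_distrib add_divide_distrib)
  show "Re (inverse (base n) * w) = (- real n * Re w + Im w) / (real n ^ 2 + 1)"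
    unfolding beta_eq e1 e2 ..
  show "Im (inverse (base n) * w) = (- Re w - real n * Im w) / (real n ^ 2 + 1)"
    unfolding beta_eq e1 e3 ..
qed

lemma norm_beta: "n \<ge> 1 \<Longrightarrow> norm (inverse (base n)) < 1"
proof -
  assume n: "n \<ge> 1"
  have "norm (base n) = sqrt (real n ^ 2 + 1)" by (simp add: base_def complex_norm)
  also have "\<dots> > 1" using n by simp
  finally show ?thesis by (simp add: norm_inverse inverse_less_1_iff)
qed

lemma summ:
  assumes n: "n \<ge> 1" and hb: "\<And>j. \<bar>h j\<bar> \<le> M"
  shows "summable (\<lambda>j. of_int (h j) * inverse (base n) ^ Suc j)"
proof (rule summable_comparison_test')
  let ?c = "norm (inverse (base n))"
  show "summable (\<lambda>j. (real_of_int M * ?c) * ?c ^ j)"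
    using norm_beta[OF n] by (intro summable_mult summable_geometric) simp
  fix j :: nat
  have "norm (of_int (h j) * inverse (base n) ^ Suc j :: complex) = real_of_int \<bar>h j\<bar> * ?c ^ Suc j"
    by (simp add: norm_mult norm_power)
  also have "\<dots> \<le> real_of_int M * ?c ^ Suc j"
    using hb[of j] by (intro mult_right_mono) auto
  finally show "norm (of_int (h j) * inverse (base n) ^ Suc j :: complex) \<le> (real_of_int M * ?c) * ?c ^ j"
    by (simp add: mult_ac)
qed

lemma Vsplit:
  assumes n: "n \<ge> 1" and hb: "\<And>j. \<bar>h j\<bar> \<le> M"
  shows "V n h = (\<Sum>j<k. of_int (h j) * inverse (base n) ^ Suc j) + inverse (base n) ^ k * V n (\<lambda>j. h (j + k))"
proof -
  let ?f = "\<lambda>j. of_int (h j) * inverse (base n) ^ Suc j :: complex"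
  have s: "summable ?f" by (rule summ[OF n hb])
  have s2: "summable (\<lambda>j. of_int (h (j + k)) * inverse (base n) ^ Suc j :: complex)"
    by (rule summ[OF n, of _ M]) (use hb in auto)
  have "V n h = (\<Sum>j. ?f (j + k)) + (\<Sum>j<k. ?f j)"
    unfolding V_def by (rule suminf_split_initial_segment[OF s])
  also have "(\<lambda>j. ?f (j + k)) = (\<lambda>j. inverse (base n) ^ k * (of_int (h (j + k)) * inverse (base n) ^ Suc j))"
    by (rule ext) (simp add: power_add mult_ac)
  also have "(\<Sum>j. inverse (base n) ^ k * (of_int (h (j + k)) * inverse (base n) ^ Suc j)) = inverse (base n) ^ k * V n (\<lambda>j. h (j + k))"
    unfolding V_def by (rule suminf_mult[OF s2])
  finally show ?thesis by simp
qed

lemma Vstep: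
  assumes n: "n \<ge> 1" and hb: "\<And>j. \<bar>h j\<bar> \<le> M"
  shows "V n h = inverse (base n) * (of_int (h 0) + V n (\<lambda>j. h (Suc j)))"
proof -
  have "V n h = (\<Sum>j<1. of_int (h j) * inverse (base n) ^ Suc j) + inverse (base n) ^ 1 * V n (\<lambda>j. h (j + 1))"
    by (rule Vsplit[OF n hb])
  also have "\<dots> = of_int (h 0) * inverse (base n) + inverse (base n) * V n (\<lambda>j. h (Suc j))"
    by simp
  finally show ?thesis by (simp add: distrib_left mult.commute)
qed

lemma inv_step:
  fixes r A B x y g :: real
  assumes r: "r \<ge> 0" and "\<bar>x\<bar> \<le> A" "\<bar>y\<bar> \<le> B" "\<bar>g\<bar> \<le> 2 * r^2"
    and i: "r * (A + 2 * r^2) + B \<le> A * (r^2 + 1)"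
    and ii: "A + 2 * r^2 + r * B \<le> B * (r^2 + 1)"
  shows "\<bar>(- r * (g + x) + y) / (r^2 + 1)\<bar> \<le> A \<and> \<bar>(- (g + x) - r * y) / (r^2 + 1)\<bar> \<le> B"
proof -
  have p: "r^2 + 1 > 0" using zero_le_power2[of r] by linarith
  have gx: "\<bar>g + x\<bar> \<le> A + 2 * r^2" using assms(2,4) by linarith
  have "\<bar>- r * (g + x) + y\<bar> \<le> r * \<bar>g + x\<bar> + \<bar>y\<bar>" 
    using abs_triangle_ineq[of "- r * (g + x)" y] r by (simp add: abs_mult)
  also have "\<dots> \<le> r * (A + 2 * r^2) + B" using gx r assms(3) by (intro add_mono mult_left_mono) auto
  finally have 1: "\<bar>- r * (g + x) + y\<bar> \<le> A * (r^2 + 1)" using i by linarith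
  have "\<bar>- (g + x) - r * y\<bar> \<le> \<bar>g + x\<bar> + r * \<bar>y\<bar>" 
    using abs_triangle_ineq4[of "- (g + x)" "r * y"] r by (simp add: abs_mult)
  also have "\<dots> \<le> (A + 2 * r^2) + r * B" using gx r assms(3) by (intro add_mono mult_left_mono) auto
  finally have 2: "\<bar>- (g + x) - r * y\<bar> \<le> B * (r^2 + 1)" using ii by linarith
  have "\<bar>(- r * (g + x) + y) / (r^2 + 1)\<bar> = \<bar>- r * (g + x) + y\<bar> / (r^2 + 1)"
    by (rule abs_div_pos[OF p, symmetric])
  also have "\<dots> \<le> A" by (subst pos_divide_le_eq[OF p]) (use 1 in linarith)
  finally have 3: "\<bar>(- r * (g + x) + y) / (r^2 + 1)\<bar> \<le> A" .
  have "\<bar>(- (g + x) - r * y) / (r^2 + 1)\<bar> = \<bar>- (g + x) - r * y\<bar> / (r^2 + 1)"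
    by (rule abs_div_pos[OF p, symmetric])
  also have "\<dots> \<le> B" by (subst pos_divide_le_eq[OF p]) (use 2 in linarith)
  finally show ?thesis using 3 by blast
qed


lemma box:
  fixes A B :: real
  assumes n: "n \<ge> 1" and hb: "\<And>j. \<bar>h j\<bar> \<le> 2 * int n ^ 2"
    and A: "A \<ge> 0" and B: "B \<ge> 0"
    and i: "real n * (A + 2 * real n^2) + B \<le> A * (real n^2 + 1)"
    and ii: "A + 2 * real n^2 + real n * B \<le> B * (real n^2 + 1)"
  shows "\<bar>Re (V n h)\<bar> \<le> A \<and> \<bar>Im (V n h)\<bar> \<le> B"
proof -
  define P where "P = (\<lambda>m (h :: nat \<Rightarrow> int). \<Sum>j<m. of_int (h j) * inverse (base n) ^ Suc j :: complex)"
  have claim: "\<forall>h. (\<forall>j. \<bar>h j\<bar> \<le> 2 * int n ^ 2) \<longrightarrow> \<bar>Re (P m h)\<bar> \<le> A \<and> \<bar>Im (P m h)\<bar> \<le> B" for m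
  proof (induction m)
    case 0
    then show ?case using A B by (simp add: P_def)
  next
    case (Suc m)
    show ?case
    proof (intro allI impI)
      fix h :: "nat \<Rightarrow> int"
      assume h: "\<forall>j. \<bar>h j\<bar> \<le> 2 * int n ^ 2"
      have hs: "\<forall>j. \<bar>h (Suc j)\<bar> \<le> 2 * int n ^ 2" using h by simp
      have IH: "\<bar>Re (P m (\<lambda>j. h (Suc j)))\<bar> \<le> A \<and> \<bar>Im (P m (\<lambda>j. h (Suc j)))\<bar> \<le> B"
        using spec[OF Suc.IH, of "\<lambda>j. h (Suc j)"] hs by simp
      have eq: "P (Suc m) h = inverse (base n) * (of_int (h 0) + P m (\<lambda>j. h (Suc j)))"
        unfolding P_def sum.lessThan_Suc_shift distrib_left sum_distrib_left
        by (simp add: mult_ac)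
      have dn: "real n ^ 2 + 1 \<noteq> 0" "1 + real n ^ 2 \<noteq> 0" using zero_le_power2[of "real n"] by linarith+
      define z where "z = P m (\<lambda>j. h (Suc j))"
      have g0: "\<bar>h 0\<bar> \<le> 2 * int n ^ 2" using h by simp
      have "real_of_int \<bar>h 0\<bar> \<le> real_of_int (2 * int n ^ 2)" by (simp only: of_int_le_iff g0)
      then have g: "\<bar>real_of_int (h 0)\<bar> \<le> 2 * real n ^ 2" by simp
      have "Re (P (Suc m) h) = (- real n * (of_int (h 0) + Re z) + Im z) / (real n ^ 2 + 1)"
           "Im (P (Suc m) h) = (- (of_int (h 0) + Re z) - real n * Im z) / (real n ^ 2 + 1)"
        unfolding eq z_def[symmetric] ReIm_beta by simp_all
      then show "\<bar>Re (P (Suc m) h)\<bar> \<le> A \<and> \<bar>Im (P (Suc m) h)\<bar> \<le> B"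
        using inv_step[of "real n" "Re z" A "Im z" B "of_int (h 0)"] IH g i ii unfolding z_def by simp
    qed
  qed
  have s: "summable (\<lambda>j. of_int (h j) * inverse (base n) ^ Suc j)" by (rule summ[OF n hb])
  have lim: "(\<lambda>m. P m h) \<longlonglongrightarrow> V n h" unfolding P_def V_def by (rule summable_LIMSEQ[OF s])
  have hb': "\<forall>j. \<bar>h j\<bar> \<le> 2 * int n ^ 2" using hb by simp
  note cl = claim[rule_format, OF hb]
  have "\<bar>Re (V n h)\<bar> \<le> A"
    by (rule LIMSEQ_le_const2[OF tendsto_rabs[OF tendsto_Re[OF lim]]]) (use cl in auto)
  moreover have "\<bar>Im (V n h)\<bar> \<le> B"
    by (rule LIMSEQ_le_const2[OF tendsto_rabs[OF tendsto_Im[OF lim]]]) (use cl in auto)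
  ultimately show ?thesis by blast
qed

lemma base_ne0: "base n \<noteq> 0" by (simp add: base_def complex_eq_iff)

lemma ReIm_base: "Re (base n * w) = - real n * Re w - Im w" "Im (base n * w) = Re w - real n * Im w"
  by (simp_all add: base_def)

lemma diffset_bound:
  assumes "D \<subseteq> {0 .. int (n^2)}" "x \<in> diffset D"
  shows "\<bar>x\<bar> \<le> int n ^ 2"
proof -
  obtain d d' where "x = d - d'" "d \<in> D" "d' \<in> D" using assms(2) unfolding diffset_def by blast
  moreover have "\<And>y. y \<in> D \<Longrightarrow> 0 \<le> y \<and> y \<le> int n ^ 2" using assms(1) by auto
  ultimately have "0 \<le> d" "d \<le> int n ^ 2" "0 \<le> d'" "d' \<le> int n ^ 2" "x = d - d'" by auto
  then show ?thesis by linarith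
qed

lemma tile_V:
  assumes n: "n \<ge> 1" and x: "x \<in> tile n ds" and dsb: "\<forall>\<delta>\<in>set ds. \<bar>\<delta>\<bar> \<le> int n ^ 2"
  shows "\<exists>s. (\<forall>j<length ds. s j = ds ! j) \<and> (\<forall>j. \<bar>s j\<bar> \<le> int n ^ 2) \<and> x = V n s"
proof -
  let ?k = "length ds"
  obtain e where e: "e \<in> attractor n"
    and xe: "x = (\<Sum>j<?k. of_int (ds ! j) * inverse (base n) ^ Suc j) + inverse (base n) ^ ?k * e"
    using x unfolding tile_def by blast
  obtain d where d: "\<forall>j. d j \<in> {- int (n^2) .. int (n^2)}" and ed: "e = V n d"
    using e unfolding attractor_def V_def by blast
  define s where "s = (\<lambda>j. if j < ?k then ds ! j else d (j - ?k))"
  have sb: "\<forall>j. \<bar>s j\<bar> \<le> int n ^ 2"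
  proof
    fix j show "\<bar>s j\<bar> \<le> int n ^ 2"
      using dsb d[rule_format, of "j - ?k"] by (auto simp: s_def)
  qed
  have "V n s = (\<Sum>j<?k. of_int (s j) * inverse (base n) ^ Suc j) + inverse (base n) ^ ?k * V n (\<lambda>j. s (j + ?k))"
    by (rule Vsplit[OF n]) (use sb in blast)
  also have "(\<Sum>j<?k. of_int (s j) * inverse (base n) ^ Suc j) = (\<Sum>j<?k. of_int (ds ! j) * inverse (base n) ^ Suc j)"
    by (rule sum.cong) (auto simp: s_def)
  also have "(\<lambda>j. s (j + ?k)) = d" by (rule ext) (simp add: s_def)
  finally have "x = V n s" using xe ed by simp
  moreover have "\<forall>j<length ds. s j = ds ! j" by (simp add: s_def)
  ultimately show ?thesis using sb by blast
qed

lemma beta_ne0: "inverse (base n) \<noteq> 0" by (simp add: base_ne0)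

lemma core:
  assumes n: "n \<ge> 2" and hb: "\<And>j. \<bar>h j\<bar> \<le> 2 * int n ^ 2" and V0: "V n h = 0"
    and z: "\<forall>j<j0. h j = 0"
  shows "(n \<ge> 5 \<longrightarrow> \<bar>h j0\<bar> \<le> 2) \<and> (n < 5 \<longrightarrow> \<bar>h j0\<bar> \<le> 3)"
proof -
  have n1: "n \<ge> 1" using n by simp
  let ?b = "inverse (base n)"
  define h1 where "h1 = (\<lambda>j. h (j + j0))"
  define h2 where "h2 = (\<lambda>j. h1 (Suc j))"
  define h3 where "h3 = (\<lambda>j. h2 (Suc j))"
  define h4 where "h4 = (\<lambda>j. h3 (Suc j))"
  define c where "c = h j0"
  have b1: "\<And>j. \<bar>h1 j\<bar> \<le> 2 * int n ^ 2" unfolding h1_def using hb by simp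
  have b2: "\<And>j. \<bar>h2 j\<bar> \<le> 2 * int n ^ 2" unfolding h2_def using b1 by simp
  have b3: "\<And>j. \<bar>h3 j\<bar> \<le> 2 * int n ^ 2" unfolding h3_def using b2 by simp
  have b4: "\<And>j. \<bar>h4 j\<bar> \<le> 2 * int n ^ 2" unfolding h4_def using b3 by simp
  have "V n h = (\<Sum>j<j0. of_int (h j) * ?b ^ Suc j) + ?b ^ j0 * V n h1"
    unfolding h1_def by (rule Vsplit[OF n1 hb])
  also have "(\<Sum>j<j0. of_int (h j) * ?b ^ Suc j) = 0" using z by simp
  finally have "?b ^ j0 * V n h1 = 0" using V0 by simp
  then have V1: "V n h1 = 0" using beta_ne0[of n] by simp
  have "V n h1 = ?b * (of_int (h1 0) + V n h2)" unfolding h2_def by (rule Vstep[OF n1 b1])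
  then have V2: "V n h2 = - of_int c" using V1 beta_ne0[of n] unfolding c_def h1_def
    by (simp add: add_eq_0_iff)
  have "V n h2 = ?b * (of_int (h2 0) + V n h3)" unfolding h3_def by (rule Vstep[OF n1 b2])
  then have "base n * V n h2 = of_int (h2 0) + V n h3" using base_ne0[of n] by (simp add: field_simps)
  then have V3: "V n h3 = base n * (- of_int c) - of_int (h2 0)" using V2 by (simp add: algebra_simps)
  have Im3: "Im (V n h3) = - of_int c" unfolding V3 by (simp add: ReIm_base base_def)
  have Re3: "Re (V n h3) = real n * of_int c - of_int (h2 0)" unfolding V3 by (simp add: ReIm_base base_def)
  show ?thesis
  proof (cases "n \<ge> 5")
    case True
    define r where "r = real n"
    have r5: "r \<ge> 5" using True by (simp add: r_def)
    have sq: "r^2 \<ge> 10 * r - 25" using zero_le_power2[of "r - 5"] by (simp add: power2_eq_square algebra_simps)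
    have e1: "r * ((2 * r + 5/2) + 2 * r^2) + 299/100 = 2 * r^3 + 2 * r^2 + 5/2 * r + 299/100"
      by (simp add: algebra_simps power2_eq_square power3_eq_cube)
    have e2: "(2 * r + 5/2) * (r^2 + 1) = 2 * r^3 + 5/2 * r^2 + 2 * r + 5/2"
      by (simp add: algebra_simps power2_eq_square power3_eq_cube)
    have e3: "299/100 * (r^2 + 1) = 299/100 * r^2 + 299/100" by (simp add: algebra_simps)
    have "\<bar>Re (V n h3)\<bar> \<le> 2 * r + 5/2 \<and> \<bar>Im (V n h3)\<bar> \<le> 299/100"
      unfolding r_def
    proof (rule box[OF n1 b3])
      show "0 \<le> 2 * real n + 5/2" by simp
      show "0 \<le> (299/100::real)" by simp
      show "real n * (2 * real n + 5 / 2 + 2 * (real n)\<^sup>2) + 299 / 100 \<le> (2 * real n + 5 / 2) * ((real n)\<^sup>2 + 1)"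
        using e1 e2 sq r5 unfolding r_def by linarith
      show "2 * real n + 5 / 2 + 2 * (real n)\<^sup>2 + real n * (299 / 100) \<le> 299 / 100 * ((real n)\<^sup>2 + 1)"
        using sq r5 e3 unfolding r_def by linarith
    qed
    then have "\<bar>real_of_int c\<bar> \<le> 299/100" using Im3 by simp
    then have "\<bar>c\<bar> \<le> 2" by linarith
    then show ?thesis using True c_def by simp
  next
    case False
    then have "n = 2 \<or> n = 3 \<or> n = 4" using n by auto
    then show ?thesis
    proof (elim disjE)
      assume n2: "n = 2"
      have "V n h3 = ?b * (of_int (h3 0) + V n h4)" unfolding h4_def by (rule Vstep[OF n1 b3])
      then have "base n * V n h3 = of_int (h3 0) + V n h4" using base_ne0[of n] by (simp add: field_simps)
      then have V4: "V n h4 = base n * V n h3 - of_int (h3 0)" by (simp add: algebra_simps)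
      have Im4: "Im (V n h4) = 4 * of_int c - of_int (h2 0)"
        unfolding V4 using Re3 Im3 n2 by (simp add: ReIm_base base_def)
      have "\<bar>Re (V n h4)\<bar> \<le> 7 \<and> \<bar>Im (V n h4)\<bar> \<le> 5"
        by (rule box[OF n1 b4]) (simp_all add: n2)
      then have "\<bar>4 * real_of_int c - real_of_int (h2 0)\<bar> \<le> 5" using Im4 by simp
      moreover have "\<bar>real_of_int (h2 0)\<bar> \<le> 8" using b2[of 0] n2 by simp
      ultimately have "\<bar>c\<bar> \<le> 3" by linarith
      then show ?thesis using n2 c_def by simp
    next
      assume n3: "n = 3"
      have "\<bar>Re (V n h3)\<bar> \<le> 17/2 \<and> \<bar>Im (V n h3)\<bar> \<le> 39/10"
        by (rule box[OF n1 b3]) (simp_all add: n3)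
      then have "\<bar>real_of_int c\<bar> \<le> 39/10" using Im3 by simp
      then have "\<bar>c\<bar> \<le> 3" by linarith
      then show ?thesis using n3 c_def by simp
    next
      assume n4: "n = 4"
      have "\<bar>Re (V n h3)\<bar> \<le> 21/2 \<and> \<bar>Im (V n h3)\<bar> \<le> 39/10"
        by (rule box[OF n1 b3]) (simp_all add: n4)
      then have "\<bar>real_of_int c\<bar> \<le> 39/10" using Im3 by simp
      then have "\<bar>c\<bar> \<le> 3" by linarith
      then show ?thesis using n4 c_def by simp
    qed
  qed
qed

theorem lemma4p8:
  fixes n k :: nat and D :: "int set" and ds ds' :: "int list"
  assumes "n \<ge> 2"
    and "D \<subseteq> {0 .. int (n^2)}"
    and "sparse n (diffset D)"
    and "k \<ge> 1"
    and "length ds = k" and "length ds' = k"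
    and "set ds \<subseteq> diffset D" and "set ds' \<subseteq> diffset D"
    and "\<exists>j<k. ds ! j \<noteq> ds' ! j"
  shows "tile n ds \<inter> tile n ds' = {}"
proof (rule equals0I)
  fix x assume x: "x \<in> tile n ds \<inter> tile n ds'"
  have n1: "n \<ge> 1" using assms(1) by simp
  have db: "\<forall>\<delta>\<in>set ds. \<bar>\<delta>\<bar> \<le> int n ^ 2" using assms(2,7) diffset_bound by blast
  have db': "\<forall>\<delta>\<in>set ds'. \<bar>\<delta>\<bar> \<le> int n ^ 2" using assms(2,8) diffset_bound by blast
  obtain s where s1: "\<forall>j<length ds. s j = ds ! j" and s2: "\<forall>j. \<bar>s j\<bar> \<le> int n ^ 2" and s3: "x = V n s"
    using tile_V[OF n1 _ db] x by blast
  obtain s' where s1': "\<forall>j<length ds'. s' j = ds' ! j" and s2': "\<forall>j. \<bar>s' j\<bar> \<le> int n ^ 2" and s3': "x = V n s'"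
    using tile_V[OF n1 _ db'] x by blast
  define h where "h = (\<lambda>j. s j - s' j)"
  have hb: "\<And>j. \<bar>h j\<bar> \<le> 2 * int n ^ 2"
  proof -
    fix j show "\<bar>h j\<bar> \<le> 2 * int n ^ 2" using s2[rule_format, of j] s2'[rule_format, of j] unfolding h_def by linarith
  qed
  have sm: "summable (\<lambda>j. of_int (s j) * inverse (base n) ^ Suc j)"
    by (rule summ[OF n1]) (use s2 in blast)
  have sm': "summable (\<lambda>j. of_int (s' j) * inverse (base n) ^ Suc j)"
    by (rule summ[OF n1]) (use s2' in blast)
  have "V n s - V n s' = V n h"
    unfolding V_def suminf_diff[OF sm sm'] h_def by (simp add: left_diff_distrib)
  then have V0: "V n h = 0" using s3 s3' by simp
  obtain j1 where j1: "j1 < k" "ds ! j1 \<noteq> ds' ! j1" using assms(9) by blast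
  have hj1: "h j1 \<noteq> 0" using j1 s1 s1' assms(5,6) unfolding h_def by auto
  define j0 where "j0 = (LEAST j. h j \<noteq> 0)"
  have hj0: "h j0 \<noteq> 0" unfolding j0_def by (rule LeastI[of _ j1]) (rule hj1)
  have "j0 \<le> j1" unfolding j0_def by (rule Least_le) (rule hj1)
  then have j0k: "j0 < k" using j1 by simp
  have z: "\<forall>j<j0. h j = 0" unfolding j0_def using not_less_Least by blast
  have hj0eq: "h j0 = ds ! j0 - ds' ! j0" using j0k s1 s1' assms(5,6) unfolding h_def by auto
  have m1: "ds ! j0 \<in> diffset D" using assms(5,7) j0k nth_mem by blast
  have m2: "ds' ! j0 \<in> diffset D" using assms(6,8) j0k nth_mem by blast
  have ne: "ds ! j0 \<noteq> ds' ! j0" using hj0 hj0eq by simp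
  have sp: "if n \<ge> 5 then \<bar>ds ! j0 - ds' ! j0\<bar> > 2 else \<bar>ds ! j0 - ds' ! j0\<bar> > 3"
    using assms(3) m1 m2 ne unfolding sparse_def by blast
  have co: "(n \<ge> 5 \<longrightarrow> \<bar>h j0\<bar> \<le> 2) \<and> (n < 5 \<longrightarrow> \<bar>h j0\<bar> \<le> 3)"
    by (rule core[OF assms(1) hb V0 z])
  show False using sp co hj0eq by (auto split: if_splits)
qed

end
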